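(* For each class $X\in\{\mathrm{sing},\mathrm{cont},\mathrm{op},\mathrm{clos}\}$ choose independently a pair $(\alpha_X,\beta_X)\in\{(2,1),(1,2)\}$ (16 choices in all). Then for every $n\ge1$, $$\sum_{\sigma\in S_n} q^{\,n-\mathrm{run}(\sigma)+\sum_{X}\left(\alpha_X\,\mathrm{lsg}(X)(\sigma)+\beta_X\,\mathrm{rsg}(X)(\sigma)\right)}=[n]_q!.$$
   Context: $[n]_q=\frac{1-q^n}{1-q}$, $[n]_q!=[n]_q\cdots[1]_q$. A permutation $\sigma\in S_n$ is written as the word $\sigma(1)\cdots\sigma(n)$; its runs are the maximal contiguous increasing segments, $\mathrm{run}(\sigma)$ is their number. A run of length $\ge2$ is proper, of length 1 is a singleton run. Classes: $\mathrm{op}(\sigma)$ = first elements of proper runs, $\mathrm{clos}(\sigma)$ = last elements of proper runs, $\mathrm{sing}(\sigma)$ = elements forming singleton runs, $\mathrm{cont}(\sigma)$ = all other elements. For $i\in\{1,\dots,n\}$, $\mathrm{lsg}(i)$ is the number of runs lying strictly to the left of $i$ (not containing $i$) that contain both an element smaller and an element greater than $i$; $\mathrm{rsg}(i)$ is the analogous number to the right. $\mathrm{lsg}(X)(\sigma)=\sum_{i\in X(\sigma)}\mathrm{lsg}(i)$, $\mathrm{rsg}(X)(\sigma)=\sum_{i\in X(\sigma)}\mathrm{rsg}(i)$. *)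

theory Defs
  imports Main "HOL-Combinatorics.Multiset_Permutations"
begin

text \<open>q-integers and q-factorials, written polynomially:
  [n]_q = (1 - q^n)/(1 - q) = 1 + q + ... + q^(n-1).\<close>
definition q_int :: "nat \<Rightarrow> 'a::comm_ring_1 \<Rightarrow> 'a" where
  "q_int n q = (\<Sum>i<n. q ^ i)"

definition q_fact :: "nat \<Rightarrow> 'a::comm_ring_1 \<Rightarrow> 'a" where
  "q_fact n q = (\<Prod>k\<in>{1..n}. q_int k q)"

fun runs :: "nat list \<Rightarrow> nat list list" where
  "runs [] = []"
| "runs [x] = [[x]]"
| "runs (x # y # zs) =
     (if x < y then (case runs (y # zs) of [] \<Rightarrow> [[x]] | r # rs \<Rightarrow> (x # r) # rs)
      else [x] # runs (y # zs))"

definition run :: "nat list \<Rightarrow> nat" where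
  "run \<sigma> = length (runs \<sigma>)"

definition run_idx :: "nat list \<Rightarrow> nat \<Rightarrow> nat" where
  "run_idx \<sigma> i = (THE k. k < length (runs \<sigma>) \<and> i \<in> set (runs \<sigma> ! k))"

definition separates :: "nat list \<Rightarrow> nat \<Rightarrow> bool" where
  "separates r i \<longleftrightarrow> (\<exists>a\<in>set r. a < i) \<and> (\<exists>b\<in>set r. i < b)"

definition lsg :: "nat list \<Rightarrow> nat \<Rightarrow> nat" where
  "lsg \<sigma> i = card {j. j < run_idx \<sigma> i \<and> separates (runs \<sigma> ! j) i}"

definition rsg :: "nat list \<Rightarrow> nat \<Rightarrow> nat" where
  "rsg \<sigma> i = card {j. run_idx \<sigma> i < j \<and> j < length (runs \<sigma>) \<and> separates (runs \<sigma> ! j) i}"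

datatype rclass = Sing | Cont | Op | Clos

definition class_set :: "rclass \<Rightarrow> nat list \<Rightarrow> nat set" where
  "class_set X \<sigma> = (case X of
      Op \<Rightarrow> {hd r | r. r \<in> set (runs \<sigma>) \<and> length r \<ge> 2}
    | Clos \<Rightarrow> {last r | r. r \<in> set (runs \<sigma>) \<and> length r \<ge> 2}
    | Sing \<Rightarrow> {hd r | r. r \<in> set (runs \<sigma>) \<and> length r = 1}
    | Cont \<Rightarrow> set \<sigma> - ({hd r | r. r \<in> set (runs \<sigma>) \<and> length r \<ge> 2}
                      \<union> {last r | r. r \<in> set (runs \<sigma>) \<and> length r \<ge> 2}
                      \<union> {hd r | r. r \<in> set (runs \<sigma>) \<and> length r = 1}))"

definition lsgX :: "rclass \<Rightarrow> nat list \<Rightarrow> nat" where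
  "lsgX X \<sigma> = (\<Sum>i\<in>class_set X \<sigma>. lsg \<sigma> i)"

definition rsgX :: "rclass \<Rightarrow> nat list \<Rightarrow> nat" where
  "rsgX X \<sigma> = (\<Sum>i\<in>class_set X \<sigma>. rsg \<sigma> i)"

end

theory Submission
  imports Defs
begin


lemma q_int_0[simp]: "q_int 0 q = 0" by (simp add: q_int_def)
lemma q_int_Suc: "q_int (Suc k) q = 1 + q * q_int k q"
  unfolding q_int_def sum.lessThan_Suc_shift by (simp add: sum_distrib_left)
lemma q_int_Suc': "q_int (Suc k) q = q_int k q + q ^ k"
  unfolding q_int_def by simp
lemma q_int_add: "q_int (a + b) q = q_int a q + q ^ a * q_int b q"
  by (induction b) (simp_all add: q_int_Suc' algebra_simps power_add)

fun FF :: "'a::comm_ring_1 \<Rightarrow> nat \<Rightarrow> nat \<Rightarrow> 'a" where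
  "FF q 0 h = (if h = 0 then 1 else 0)"
| "FF q (Suc k) 0 = 1"
| "FF q (Suc k) (Suc h) = FF q k (Suc h) + q ^ Suc k * FF q k h"

lemma FF_0[simp]: "FF q k 0 = 1" by (cases k) auto

lemma FF_gt: "k < h \<Longrightarrow> FF q k h = 0"
  by (induction q k h rule: FF.induct) auto

lemma FF_R2: "FF q (Suc k) (Suc h) = q ^ Suc h * (FF q k (Suc h) + FF q k h)"
proof (induction k arbitrary: h)
  case 0
  then show ?case by (cases h) auto
next
  case (Suc k)
  show ?case
  proof (cases h)
    case 0
    have h1: "FF q (Suc k) (Suc 0) = q * (FF q k (Suc 0) + 1)" using Suc.IH[of 0] by (simp only: power_one_right FF_0 power_Suc0_right)
    have h0: "FF q (Suc k) (Suc 0) = FF q k (Suc 0) + q ^ Suc k" by simp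
    have h2: "FF q k (Suc 0) + q ^ Suc k = q * FF q k (Suc 0) + q" using h0 h1 by (simp add: algebra_simps)
    have "FF q (Suc (Suc k)) (Suc 0) = FF q k (Suc 0) + q ^ Suc k + q ^ Suc (Suc k)" using h0 by simp
    also have "\<dots> = (q * FF q k (Suc 0) + q) + q ^ Suc (Suc k)" by (simp only: h2)
    also have "\<dots> = q * (FF q k (Suc 0) + q ^ Suc k) + q" by (simp add: algebra_simps)
    also have "\<dots> = q * (FF q (Suc k) (Suc 0) + 1)" by (simp only: h0) (simp add: algebra_simps)
    finally have "FF q (Suc (Suc k)) (Suc 0) = q * (FF q (Suc k) (Suc 0) + 1)" .
    then show ?thesis unfolding 0 by (simp only: FF_0 power_Suc0_right)
  next
    case (Suc h')
    have i1: "FF q (Suc k) (Suc h) = q ^ Suc h * (FF q k (Suc h) + FF q k h)" by (rule Suc.IH)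
    have i2: "FF q (Suc k) h = q ^ h * (FF q k h + FF q k h')" using Suc.IH[of h'] \<open>h = Suc h'\<close> by simp
    have d1: "FF q (Suc k) (Suc h) = FF q k (Suc h) + q ^ Suc k * FF q k h" by simp
    have d2: "FF q (Suc k) h = FF q k h + q ^ Suc k * FF q k h'" using \<open>h = Suc h'\<close> by simp
    have "FF q (Suc (Suc k)) (Suc h) = FF q (Suc k) (Suc h) + q ^ Suc (Suc k) * FF q (Suc k) h" by simp
    also have "\<dots> = q ^ Suc h * (FF q k (Suc h) + FF q k h) + q ^ Suc (Suc k) * (q ^ h * (FF q k h + FF q k h'))"
      by (simp only: i1 i2)
    also have "\<dots> = q ^ Suc h * ((FF q k (Suc h) + q ^ Suc k * FF q k h) + (FF q k h + q ^ Suc k * FF q k h'))"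
      by (simp add: algebra_simps)
    also have "\<dots> = q ^ Suc h * (FF q (Suc k) (Suc h) + FF q (Suc k) h)" by (simp only: d1 d2)
    finally show ?thesis .
  qed
qed

lemma FF_R: "q_int (Suc h) q * FF q k (Suc h) = q ^ Suc h * q_int (k - h) q * FF q k h"
proof (induction k arbitrary: h)
  case 0
  then show ?case by simp
next
  case (Suc k)
  show ?case
  proof (cases h)
    case 0
    then show ?thesis using Suc.IH[of 0] by (simp add: q_int_Suc' algebra_simps)
  next
    case (Suc h')
    show ?thesis
    proof (cases "h \<le> k")
      case True
      have e1: "q_int (Suc k - h) q = q_int (k - h) q + q ^ (k - h)"
        using True by (simp add: Suc_diff_le q_int_Suc')
      have e2: "q_int (Suc h) q = 1 + q * q_int h q" by (simp add: q_int_Suc)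
      have e3: "q ^ (k - h) * q ^ Suc h = q ^ Suc k" using True
        by (metis power_add Suc_diff_le add_Suc_right diff_add_inverse2 le_add_diff_inverse2)
      have IH1: "q_int (Suc h) q * FF q k (Suc h) = q ^ Suc h * q_int (k - h) q * FF q k h"
        by (rule Suc.IH)
      have IH2: "q_int h q * FF q k h = q ^ h * q_int (k - h') q * FF q k h'"
        using Suc.IH[of h'] \<open>h = Suc h'\<close> by simp
      have "q_int (Suc h) q * FF q (Suc k) (Suc h) =
          q_int (Suc h) q * FF q k (Suc h) + q ^ Suc k * (FF q k h + q * (q_int h q * FF q k h))"
        by (simp add: e2 algebra_simps)
      also have "\<dots> = q ^ Suc h * q_int (k - h) q * FF q k h + q ^ Suc k * (FF q k h + q * (q ^ h * q_int (k - h') q * FF q k h'))"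
        using IH1 IH2 by simp
      also have "\<dots> = q ^ Suc h * q_int (Suc k - h) q * FF q (Suc k) h"
      proof -
        have "FF q (Suc k) h = FF q k h + q ^ Suc k * FF q k h'" using \<open>h = Suc h'\<close> by simp
        moreover have "Suc k - h = k - h'" using \<open>h = Suc h'\<close> by simp
        moreover obtain d where "k = h + d" using True le_Suc_ex by blast
        ultimately show ?thesis using \<open>h = Suc h'\<close>
          by (simp add: algebra_simps power_add q_int_Suc')
      qed
      finally show ?thesis .
    next
      case False
      then show ?thesis by (simp add: FF_gt)
    qed
  qed
qed

definition Fm :: "'a::comm_ring_1 \<Rightarrow> nat \<Rightarrow> nat \<Rightarrow> 'a" where
  "Fm q k h = (if h = 0 then 0 else FF q k (h - 1))"

lemma FF_T: "q_int (Suc k) q * FF q (Suc k) h =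
   q ^ h * q_int (Suc h) q * (FF q k (Suc h) + FF q k h) + q ^ h * q_int h q * (FF q k h + Fm q k h)"
proof (cases h)
  case 0
  have "q_int (Suc 0) q * FF q k (Suc 0) = q ^ Suc 0 * q_int (k - 0) q * FF q k 0" by (rule FF_R)
  then have "FF q k (Suc 0) = q * q_int k q" by (simp add: q_int_def)
  then show ?thesis using 0 by (simp add: q_int_Suc algebra_simps)
next
  case (Suc h')
  have r1: "q_int (Suc h) q * FF q k (Suc h) = q ^ Suc h * q_int (k - h) q * FF q k h" by (rule FF_R)
  have r2: "q_int h q * FF q k h = q ^ h * q_int (k - h') q * FF q k h'" using FF_R[of h' q k] Suc by simp
  have t1: "q ^ h * q_int (Suc h) q * (FF q k (Suc h) + FF q k h) = q ^ h * q_int (Suc k) q * FF q k h"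
  proof (cases "h \<le> k")
    case True
    then obtain d where d: "k = h + d" using le_Suc_ex by blast
    have "q ^ h * q_int (Suc h) q * (FF q k (Suc h) + FF q k h) = q ^ h * (q_int (Suc h) q * FF q k (Suc h) + q_int (Suc h) q * FF q k h)"
      by (simp add: algebra_simps)
    also have "\<dots> = q ^ h * (q ^ Suc h * q_int d q + q_int (Suc h) q) * FF q k h"
      by (simp only: r1) (simp add: d algebra_simps)
    also have "q ^ Suc h * q_int d q + q_int (Suc h) q = q_int (Suc k) q"
      using q_int_add[of "Suc h" d q] d by (simp add: algebra_simps)
    finally show ?thesis by simp
  next
    case False
    then show ?thesis by (simp add: FF_gt)
  qed
  have t2: "q ^ h * q_int h q * (FF q k h + Fm q k h) = q ^ h * q_int (Suc k) q * FF q k h'"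
  proof (cases "h' \<le> k")
    case True
    then obtain d where d: "k = h' + d" using le_Suc_ex by blast
    have "q ^ h * q_int h q * (FF q k h + Fm q k h) = q ^ h * (q_int h q * FF q k h + q_int h q * FF q k h')"
      using Suc by (simp add: Fm_def algebra_simps)
    also have "\<dots> = q ^ h * (q ^ h * q_int d q + q_int h q) * FF q k h'"
      by (simp only: r2) (simp add: d algebra_simps)
    also have "q ^ h * q_int d q + q_int h q = q_int (Suc k) q"
      using q_int_add[of h d q] d Suc by (simp add: algebra_simps)
    finally show ?thesis by simp
  next
    case False
    then have "k < h'" by simp
    then show ?thesis using Suc by (simp add: FF_gt Fm_def)
  qed
  have "FF q (Suc k) h = q ^ h * (FF q k h + FF q k h')" using FF_R2[of q k h'] Suc by simp
  then show ?thesis using t1 t2 by (simp add: algebra_simps)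
qed

lemma q_fact_Suc: "q_fact (Suc k) q = q_fact k q * q_int (Suc k) q"
  unfolding q_fact_def by (simp add: atLeastAtMostSuc_conv mult.commute)

lemma q_fact_0: "q_fact 0 q = 1" unfolding q_fact_def by simp

definition BB :: "'a::comm_ring_1 \<Rightarrow> nat \<Rightarrow> nat \<Rightarrow> 'a" where
  "BB q k h = q_fact k q * FF q k h"

lemma BB_rec: "BB q (Suc k) h =
   q ^ h * q_int (Suc h) q * (BB q k (Suc h) + BB q k h) + q ^ h * q_int h q * (BB q k h + (if h = 0 then 0 else BB q k (h - 1)))"
proof -
  have "BB q (Suc k) h = q_fact k q * (q_int (Suc k) q * FF q (Suc k) h)"
    by (simp add: BB_def q_fact_Suc algebra_simps)
  also have "\<dots> = q_fact k q * (q ^ h * q_int (Suc h) q * (FF q k (Suc h) + FF q k h) + q ^ h * q_int h q * (FF q k h + Fm q k h))"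
    by (simp only: FF_T)
  finally show ?thesis by (simp add: BB_def Fm_def algebra_simps)
qed

lemma BB_0: "BB q 0 h = (if h = 0 then 1 else 0)" by (simp add: BB_def q_fact_0)
lemma BB_n0: "BB q n 0 = q_fact n q" by (simp add: BB_def)



type_synonym seg = "nat list \<times> bool"

definition cc :: "seg list \<Rightarrow> nat list" where "cc s = concat (map fst s)"
definition act :: "seg list \<Rightarrow> nat" where "act s = length (filter snd s)"

lemma cc_simps[simp]: "cc [] = []" "cc (S # ss) = fst S @ cc ss" "cc (xs @ ys) = cc xs @ cc ys"
  by (simp_all add: cc_def)
lemma act_simps[simp]: "act [] = 0" "act (S # ss) = (if snd S then Suc (act ss) else act ss)"
  "act (xs @ ys) = act xs + act ys"
  by (simp_all add: act_def)

fun chain :: "seg list \<Rightarrow> bool" where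
  "chain (S # T # ss) = ((snd S \<or> hd (fst T) < last (fst S)) \<and> chain (T # ss))"
| "chain _ = True"

lemma chain_Cons: "chain (S # ss) \<longleftrightarrow> chain ss \<and> (ss = [] \<or> snd S \<or> hd (fst (hd ss)) < last (fst S))"
  by (cases ss) auto

lemma chain_append: "chain (xs @ ys) \<longleftrightarrow> chain xs \<and> chain ys \<and>
   (xs = [] \<or> ys = [] \<or> snd (last xs) \<or> hd (fst (hd ys)) < last (fst (last xs)))"
proof (induction xs)
  case Nil
  then show ?case by simp
next
  case (Cons x xs)
  then show ?case by (cases xs) (auto simp: chain_Cons)
qed

definition valid :: "nat \<Rightarrow> seg list \<Rightarrow> bool" where
  "valid m s \<longleftrightarrow> distinct (cc s) \<and> set (cc s) = {1..m} \<and>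
     (\<forall>S\<in>set s. fst S \<noteq> [] \<and> sorted_wrt (<) (fst S)) \<and> chain s"

fun ins :: "seg \<Rightarrow> nat \<Rightarrow> seg list \<Rightarrow> seg list" where
  "ins N 0 ss = N # ss"
| "ins N (Suc g) [] = [N]"
| "ins N (Suc g) (S # ss) = S # (if snd S then ins N g ss else ins N (Suc g) ss)"

fun app :: "nat \<Rightarrow> bool \<Rightarrow> nat \<Rightarrow> seg list \<Rightarrow> seg list" where
  "app v b j [] = []"
| "app v b j (S # ss) = (if snd S then (if j = 0 then (fst S @ [v], b) # ss else S # app v b (j - 1) ss)
      else S # app v b j ss)"

definition ext :: "seg list \<Rightarrow> nat \<Rightarrow> seg list list" where
  "ext s v = map (\<lambda>g. ins ([v], True) g s) [0..<Suc (act s)] @ map (\<lambda>g. ins ([v], False) g s) [0..<Suc (act s)]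
     @ map (\<lambda>j. app v True j s) [0..<act s] @ map (\<lambda>j. app v False j s) [0..<act s]"

fun gen :: "nat \<Rightarrow> seg list list" where
  "gen 0 = [[]]"
| "gen (Suc m) = concat (map (\<lambda>s. ext s (Suc m)) (gen m))"

lemma ins_decomp: "g \<le> act s \<Longrightarrow> \<exists>pre post. s = pre @ post \<and> ins N g s = pre @ N # post \<and> act pre = g
   \<and> (pre = [] \<or> snd (last pre))"
proof (induction N g s rule: ins.induct)
  case (1 N ss)
  then show ?case by (intro exI[of _ "[]"] exI[of _ ss]) auto
next
  case (2 N g)
  then show ?case by simp
next
  case (3 N g S ss)
  show ?case
  proof (cases "snd S")
    case True
    then obtain pre post where "ss = pre @ post" "ins N g ss = pre @ N # post" "act pre = g"
      "pre = [] \<or> snd (last pre)" using 3 by auto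
    then show ?thesis using True by (intro exI[of _ "S # pre"] exI[of _ post]) auto
  next
    case False
    then obtain pre post where "ss = pre @ post" "ins N (Suc g) ss = pre @ N # post" "act pre = Suc g"
      "pre = [] \<or> snd (last pre)" using 3 by auto
    moreover then have "pre \<noteq> []" by auto
    ultimately show ?thesis using False by (intro exI[of _ "S # pre"] exI[of _ post]) auto
  qed
qed

lemma app_decomp: "j < act s \<Longrightarrow> \<exists>pre Q post. s = pre @ (Q, True) # post \<and>
   app v b j s = pre @ (Q @ [v], b) # post \<and> act pre = j"
proof (induction v b j s rule: app.induct)
  case (1 v b j)
  then show ?case by simp
next
  case (2 v b j S ss)
  show ?case
  proof (cases "snd S")
    case True
    show ?thesis
    proof (cases "j = 0")
      case True
      then show ?thesis using \<open>snd S\<close>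
        by (intro exI[of _ "[]"] exI[of _ "fst S"] exI[of _ ss]) (cases S, auto)
    next
      case False
      have "j - 1 < act ss" using 2(3) \<open>snd S\<close> False by auto
      then obtain pre Q post where "ss = pre @ (Q, True) # post" "app v b (j - 1) ss = pre @ (Q @ [v], b) # post"
        "act pre = j - 1" using 2(1)[OF \<open>snd S\<close> False] by blast
      then show ?thesis using \<open>snd S\<close> False by (intro exI[of _ "S # pre"] exI[of _ Q] exI[of _ post]) auto
    qed
  next
    case False
    then obtain pre Q post where "ss = pre @ (Q, True) # post" "app v b j ss = pre @ (Q @ [v], b) # post"
      "act pre = j" using 2 by auto
    then show ?thesis using False by (intro exI[of _ "S # pre"] exI[of _ Q] exI[of _ post]) auto
  qed
qed

lemma ins_at: "pre = [] \<or> snd (last pre) \<Longrightarrow> ins N (act pre) (pre @ post) = pre @ N # post"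
proof (induction pre)
  case Nil
  then show ?case by simp
next
  case (Cons S pre)
  show ?case
  proof (cases "snd S")
    case True
    then show ?thesis using Cons by (cases pre) auto
  next
    case False
    then have "pre \<noteq> []" "snd (last pre)" using Cons.prems by (cases pre; auto)+
    then have "act pre > 0" by (induction pre) (auto split: if_splits)
    then obtain g where "act pre = Suc g" using not0_implies_Suc by blast
    then show ?thesis using Cons False \<open>pre \<noteq> []\<close> \<open>snd (last pre)\<close> by simp
  qed
qed

lemma app_at: "app v b (act pre) (pre @ (Q, True) # post) = pre @ (Q @ [v], b) # post"
  by (induction pre) auto



lemma valid_le: "valid m s \<Longrightarrow> S \<in> set s \<Longrightarrow> x \<in> set (fst S) \<Longrightarrow> 1 \<le> x \<and> x \<le> m"
proof -
  assume "valid m s" "S \<in> set s" "x \<in> set (fst S)"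
  then have "x \<in> set (cc s)" by (auto simp: cc_def)
  then show ?thesis using \<open>valid m s\<close> by (auto simp: valid_def)
qed

lemma valid_ins:
  assumes v: "valid m (pre @ post)" and p: "pre = [] \<or> snd (last pre)"
  shows "valid (Suc m) (pre @ ([Suc m], a) # post)"
proof -
  have d: "distinct (cc pre @ cc post)" and st: "set (cc pre) \<union> set (cc post) = {1..m}"
    using v by (auto simp: valid_def)
  have "Suc m \<notin> {1..m}" by simp
  then have "Suc m \<notin> set (cc pre)" "Suc m \<notin> set (cc post)" using st by blast+
  then have "distinct (cc (pre @ ([Suc m], a) # post))" using d by auto
  moreover have "set (cc (pre @ ([Suc m], a) # post)) = (set (cc pre) \<union> set (cc post)) \<union> {Suc m}" by auto
  then have "set (cc (pre @ ([Suc m], a) # post)) = {1..Suc m}" using st by (simp add: atLeastAtMostSuc_conv)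
  moreover have "\<forall>S\<in>set (pre @ ([Suc m], a) # post). fst S \<noteq> [] \<and> sorted_wrt (<) (fst S)"
    using v by (auto simp: valid_def)
  moreover have "chain (pre @ ([Suc m], a) # post)"
  proof -
    have c: "chain pre" "chain post" using v by (auto simp: valid_def chain_append)
    have "post = [] \<or> hd (fst (hd post)) < Suc m"
    proof (cases post)
      case (Cons T post')
      then have "fst T \<noteq> []" using v by (auto simp: valid_def)
      then have "hd (fst T) \<in> set (cc (pre @ post))" using Cons by auto
      moreover have "set (cc (pre @ post)) = {1..m}" using v unfolding valid_def by blast
      ultimately have "hd (fst T) \<in> {1..m}" by blast
      then show ?thesis using Cons by simp
    qed simp
    then have "chain (([Suc m], a) # post)" using c by (auto simp: chain_Cons)
    then show ?thesis using c p by (auto simp: chain_append)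
  qed
  ultimately show ?thesis by (simp add: valid_def)
qed

lemma valid_app:
  assumes v: "valid m (pre @ (Q, True) # post)"
  shows "valid (Suc m) (pre @ (Q @ [Suc m], b) # post)"
proof -
  have d: "distinct (cc pre @ Q @ cc post)" and st: "set (cc pre) \<union> set Q \<union> set (cc post) = {1..m}"
    using v by (auto simp: valid_def)
  have "Suc m \<notin> {1..m}" by simp
  then have "Suc m \<notin> set (cc pre)" "Suc m \<notin> set (cc post)" "Suc m \<notin> set Q" using st by blast+
  then have "distinct (cc (pre @ (Q @ [Suc m], b) # post))" using d by auto
  moreover have "set (cc (pre @ (Q @ [Suc m], b) # post)) = (set (cc pre) \<union> set Q \<union> set (cc post)) \<union> {Suc m}" by auto
  then have "set (cc (pre @ (Q @ [Suc m], b) # post)) = {1..Suc m}" using st by (simp add: atLeastAtMostSuc_conv)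
  moreover have Qs: "Q \<noteq> [] \<and> sorted_wrt (<) Q" using v by (auto simp: valid_def)
  moreover have "set Q \<subseteq> {1..m}" using st by blast
  then have "\<forall>x\<in>set Q. x < Suc m" by auto
  then have "sorted_wrt (<) (Q @ [Suc m])" using Qs by (simp add: sorted_wrt_append)
  then have "\<forall>S\<in>set (pre @ (Q @ [Suc m], b) # post). fst S \<noteq> [] \<and> sorted_wrt (<) (fst S)"
    using v by (auto simp: valid_def)
  moreover have "chain (pre @ (Q @ [Suc m], b) # post)"
  proof -
    have c: "chain pre" "chain post" "pre = [] \<or> snd (last pre) \<or> hd Q < last (fst (last pre))"
      using v by (auto simp: valid_def chain_append chain_Cons)
    have "post = [] \<or> hd (fst (hd post)) < Suc m"
    proof (cases post)
      case (Cons T post')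
      then have "fst T \<noteq> []" using v by (auto simp: valid_def)
      then have "hd (fst T) \<in> set (cc post)" using Cons by auto
      then have "hd (fst T) \<in> {1..m}" using st by blast
      then show ?thesis using Cons by auto
    qed simp
    then have "chain ((Q @ [Suc m], b) # post)" using c by (auto simp: chain_Cons)
    then show ?thesis using c Qs by (auto simp: chain_append)
  qed
  ultimately show ?thesis by (simp add: valid_def)
qed

lemma ext_cases: "t \<in> set (ext s v) \<Longrightarrow>
   (\<exists>a g. g \<le> act s \<and> t = ins ([v], a) g s) \<or> (\<exists>b j. j < act s \<and> t = app v b j s)"
  unfolding ext_def set_append Un_iff set_map image_iff set_upt atLeastLessThan_iff
  apply (elim disjE bexE)
     apply (rule disjI1; fastforce simp: less_Suc_eq_le)
    apply (rule disjI1; fastforce simp: less_Suc_eq_le)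
   apply (rule disjI2; fastforce)
  apply (rule disjI2; fastforce)
  done

lemma ext_ins: "g \<le> act s \<Longrightarrow> ins ([v], a) g s \<in> set (ext s v)"
proof -
  assume "g \<le> act s"
  then have "ins ([v], a) g s \<in> set (map (\<lambda>g. ins ([v], a) g s) [0..<Suc (act s)])"
    by (simp only: set_map set_upt) (rule imageI, simp)
  moreover have "set (map (\<lambda>g. ins ([v], True) g s) [0..<Suc (act s)]) \<subseteq> set (ext s v)"
    "set (map (\<lambda>g. ins ([v], False) g s) [0..<Suc (act s)]) \<subseteq> set (ext s v)"
    unfolding ext_def set_append by blast+
  then have "set (map (\<lambda>g. ins ([v], a) g s) [0..<Suc (act s)]) \<subseteq> set (ext s v)"
    by (cases a) (simp_all only: simp_thms)
  ultimately show ?thesis by blast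
qed

lemma ext_app: "j < act s \<Longrightarrow> app v b j s \<in> set (ext s v)"
proof -
  assume "j < act s"
  then have "app v b j s \<in> set (map (\<lambda>j. app v b j s) [0..<act s])"
    by (simp only: set_map set_upt) (rule imageI, simp)
  moreover have "set (map (\<lambda>j. app v True j s) [0..<act s]) \<subseteq> set (ext s v)"
    "set (map (\<lambda>j. app v False j s) [0..<act s]) \<subseteq> set (ext s v)"
    unfolding ext_def set_append by blast+
  then have "set (map (\<lambda>j. app v b j s) [0..<act s]) \<subseteq> set (ext s v)"
    by (cases b) (simp_all only: simp_thms)
  ultimately show ?thesis by blast
qed

lemma valid_ext: "valid m s \<Longrightarrow> t \<in> set (ext s (Suc m)) \<Longrightarrow> valid (Suc m) t"
proof -
  assume v: "valid m s" and t: "t \<in> set (ext s (Suc m))"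
  from ext_cases[OF t] show ?thesis
  proof
    assume "\<exists>a g. g \<le> act s \<and> t = ins ([Suc m], a) g s"
    then obtain a g where g: "g \<le> act s" "t = ins ([Suc m], a) g s" by blast
    from ins_decomp[OF g(1), of "([Suc m], a)"] obtain pre post where
      "s = pre @ post" "ins ([Suc m], a) g s = pre @ ([Suc m], a) # post" "pre = [] \<or> snd (last pre)" by blast
    then show ?thesis using valid_ins[of m pre post a] v g by simp
  next
    assume "\<exists>b j. j < act s \<and> t = app (Suc m) b j s"
    then obtain b j where j: "j < act s" "t = app (Suc m) b j s" by blast
    from app_decomp[OF j(1), of "Suc m" b] obtain pre Q post where
      "s = pre @ (Q, True) # post" "app (Suc m) b j s = pre @ (Q @ [Suc m], b) # post" by blast
    then show ?thesis using valid_app[of m pre Q post b] v j by simp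
  qed
qed

lemma gen_valid: "s \<in> set (gen m) \<Longrightarrow> valid m s"
proof (induction m arbitrary: s)
  case 0
  then show ?case by (simp add: valid_def)
next
  case (Suc m)
  then obtain s0 where "s0 \<in> set (gen m)" "s \<in> set (ext s0 (Suc m))" by auto
  then show ?case using Suc.IH valid_ext by blast
qed

lemma sorted_last_max: "sorted_wrt (<) (P :: nat list) \<Longrightarrow> v \<in> set P \<Longrightarrow> \<forall>x\<in>set P. x \<le> v \<Longrightarrow> P = butlast P @ [v]"
proof -
  assume s: "sorted_wrt (<) P" and v: "v \<in> set P" and m: "\<forall>x\<in>set P. x \<le> v"
  have ne: "P \<noteq> []" using v by auto
  have P: "P = butlast P @ [last P]" using ne by simp
  have lt: "\<forall>x\<in>set (butlast P). x < last P" using s P sorted_wrt_append[of "(<)" "butlast P" "[last P]"] by simp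
  have "last P = v"
  proof (rule ccontr)
    assume "last P \<noteq> v"
    then have "v \<in> set (butlast P)" using v P by (metis Un_iff empty_iff empty_set list.simps(15) set_append insertE)
    then have "v < last P" using lt by blast
    moreover have "last P \<le> v" using m ne by simp
    ultimately show False by simp
  qed
  then show ?thesis using P by simp
qed

lemma valid_pred: "valid (Suc m) t \<Longrightarrow> \<exists>s. valid m s \<and> t \<in> set (ext s (Suc m))"
proof -
  assume v: "valid (Suc m) t"
  then have "Suc m \<in> set (cc t)" by (auto simp: valid_def)
  then obtain S where S: "S \<in> set t" "Suc m \<in> set (fst S)" by (auto simp: cc_def)
  then obtain pre post where t: "t = pre @ S # post" by (meson split_list)
  obtain P a where Sa: "S = (P, a)" by fastforce
  have Ps: "P \<noteq> [] \<and> sorted_wrt (<) P" using v S Sa by (auto simp: valid_def)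
  have "\<forall>x\<in>set P. x \<le> Suc m" using valid_le[OF v S(1)] Sa by auto
  then have P: "P = butlast P @ [Suc m]" using sorted_last_max Ps S Sa by auto
  have d: "distinct (cc pre @ P @ cc post)" and st: "set (cc pre) \<union> set P \<union> set (cc post) = {1..Suc m}"
    using v t Sa by (auto simp: valid_def)
  have dP: "distinct P" "set (cc pre) \<inter> set P = {}" "set P \<inter> set (cc post) = {}" using d by auto
  have "distinct (butlast P @ [Suc m])" using dP(1) P by (metis (no_types))
  then have nin: "Suc m \<notin> set (cc pre)" "Suc m \<notin> set (cc post)" "Suc m \<notin> set (butlast P)"
    using dP S Sa by auto
  have segs: "\<forall>S\<in>set t. fst S \<noteq> [] \<and> sorted_wrt (<) (fst S)" using v by (auto simp: valid_def)
  have ch: "chain pre" "chain post" "pre = [] \<or> snd (last pre) \<or> hd P < last (fst (last pre))"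
    using v t Sa by (auto simp: valid_def chain_append chain_Cons)
  show ?thesis
  proof (cases "butlast P = []")
    case True
    then have P1: "P = [Suc m]" using P by simp
    have lp: "pre = [] \<or> snd (last pre)"
    proof (rule ccontr)
      assume "\<not> (pre = [] \<or> snd (last pre))"
      then have "pre \<noteq> []" "Suc m < last (fst (last pre))" using ch P1 by auto
      moreover have "last pre \<in> set t" "fst (last pre) \<noteq> []" using \<open>pre \<noteq> []\<close> t segs by auto
      ultimately show False using valid_le[OF v, of "last pre" "last (fst (last pre))"] by auto
    qed
    define s where "s = pre @ post"
    have "valid m s"
    proof -
      have "distinct (cc pre @ Suc m # cc post)" using d P1 by simp
      then have "distinct (cc s)" by (simp add: s_def)
      moreover have "set (cc s) = (set (cc pre) \<union> set P \<union> set (cc post)) - {Suc m}" using nin P1 by (auto simp: s_def)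
      then have "set (cc s) = {1..m}" using st by (simp add: atLeastAtMostSuc_conv)
      moreover have "chain s" using ch lp by (auto simp: s_def chain_append)
      ultimately show ?thesis using segs t by (auto simp: valid_def s_def)
    qed
    moreover have "t = ins ([Suc m], a) (act pre) s" using ins_at[OF lp] t Sa P1 by (simp add: s_def)
    moreover have "act pre \<le> act s" by (simp add: s_def)
    ultimately show ?thesis using ext_ins by blast
  next
    case False
    define Q where "Q = butlast P"
    define s where "s = pre @ (Q, True) # post"
    have QP: "P = Q @ [Suc m]" using P by (simp add: Q_def)
    have "valid m s"
    proof -
      have "distinct ((cc pre @ Q) @ Suc m # cc post)" using d QP by (metis append.assoc append_Cons append_Nil)
      then have "distinct (cc s)" by (simp add: s_def)
      moreover have sQ: "set (cc s) = set (cc pre) \<union> set Q \<union> set (cc post)" by (auto simp: s_def)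
      have "Suc m \<notin> set Q" using nin Q_def by simp
      then have "set (cc s) = (set (cc pre) \<union> set P \<union> set (cc post)) - {Suc m}" using nin sQ QP by auto
      then have "set (cc s) = {1..m}" using st by (simp add: atLeastAtMostSuc_conv)
      moreover have Qne: "Q \<noteq> []" using False by (simp add: Q_def)
      have "sorted_wrt (<) (Q @ [Suc m])" using Ps QP by metis
      then have "sorted_wrt (<) Q" by (simp add: sorted_wrt_append)
      then have "Q \<noteq> [] \<and> sorted_wrt (<) Q" using Qne by simp
      moreover have "hd P = hd Q" using QP Qne by simp
      moreover then have "chain s" using ch \<open>Q \<noteq> [] \<and> sorted_wrt (<) Q\<close>
        by (auto simp: s_def chain_append chain_Cons)
      ultimately show ?thesis using segs t by (auto simp: valid_def s_def)
    qed
    moreover have "t = app (Suc m) a (act pre) s" using app_at t Sa QP by (simp add: s_def)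
    moreover have "act pre < act s" by (simp add: s_def)
    ultimately show ?thesis using ext_app by blast
  qed
qed

lemma gen_complete: "valid m s \<Longrightarrow> s \<in> set (gen m)"
proof (induction m arbitrary: s)
  case 0
  then have "set (cc s) = {}" "\<forall>S\<in>set s. fst S \<noteq> []" by (auto simp: valid_def)
  then have "s = []" by (cases s) auto
  then show ?case by simp
next
  case (Suc m)
  then obtain s0 where "valid m s0" "s \<in> set (ext s0 (Suc m))" using valid_pred by blast
  then show ?case using Suc.IH by auto
qed




definition sepS :: "seg \<Rightarrow> nat \<Rightarrow> bool" where
  "sepS S x \<longleftrightarrow> (\<exists>z\<in>set (fst S). z < x) \<and> (snd S \<or> (\<exists>z\<in>set (fst S). x < z))"

definition cl :: "seg \<Rightarrow> nat \<Rightarrow> rclass" where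
  "cl S x = (if length (fst S) = 1 \<and> \<not> snd S then Sing else if x = hd (fst S) then Op
     else if x = last (fst S) \<and> \<not> snd S then Clos else Cont)"

definition cross :: "(rclass \<Rightarrow> nat) \<Rightarrow> (rclass \<Rightarrow> nat) \<Rightarrow> seg \<Rightarrow> seg \<Rightarrow> nat" where
  "cross \<alpha> \<beta> S Q = (\<Sum>x\<in>set (fst S). \<beta> (cl S x) * of_bool (sepS Q x))
      + (\<Sum>y\<in>set (fst Q). \<alpha> (cl Q y) * of_bool (sepS S y))"

fun Wc :: "(rclass \<Rightarrow> nat) \<Rightarrow> (rclass \<Rightarrow> nat) \<Rightarrow> seg list \<Rightarrow> nat" where
  "Wc \<alpha> \<beta> [] = 0"
| "Wc \<alpha> \<beta> (S # ss) = sum_list (map (cross \<alpha> \<beta> S) ss) + Wc \<alpha> \<beta> ss"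

definition own :: "seg list \<Rightarrow> nat" where
  "own s = sum_list (map (\<lambda>S. length (fst S) - 1) s)"

definition Wf :: "(rclass \<Rightarrow> nat) \<Rightarrow> (rclass \<Rightarrow> nat) \<Rightarrow> seg list \<Rightarrow> nat" where
  "Wf \<alpha> \<beta> s = own s + Wc \<alpha> \<beta> s"

definition okv :: "nat \<Rightarrow> seg \<Rightarrow> bool" where
  "okv v S \<longleftrightarrow> fst S \<noteq> [] \<and> (\<forall>x\<in>set (fst S). x < v)"

lemma sepS_newN: "x < v \<Longrightarrow> \<not> sepS ([v], a) x"
  by (simp add: sepS_def)

lemma sepS_v: "okv v S \<Longrightarrow> sepS S v = snd S"
  by (cases S) (auto simp: sepS_def okv_def neq_Nil_conv)

lemma cross_S_N: "okv v S \<Longrightarrow> cross \<alpha> \<beta> S ([v], a) = \<alpha> (cl ([v], a) v) * of_bool (snd S)"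
  unfolding cross_def using sepS_newN[of _ v a] sepS_v[of v S] by (simp add: okv_def)

lemma cross_N_Q: "okv v Q \<Longrightarrow> cross \<alpha> \<beta> ([v], a) Q = \<beta> (cl ([v], a) v) * of_bool (snd Q)"
  unfolding cross_def using sepS_newN[of _ v a] sepS_v[of v Q] by (simp add: okv_def)

lemma sum_cross_N: "\<forall>Q\<in>set post. okv v Q \<Longrightarrow>
   sum_list (map (cross \<alpha> \<beta> ([v], a)) post) = \<beta> (cl ([v], a) v) * act post"
  by (induction post) (auto simp: cross_N_Q)

lemma Wc_ins: "\<forall>Q\<in>set pre. okv v Q \<Longrightarrow> \<forall>Q\<in>set post. okv v Q \<Longrightarrow>
  Wc \<alpha> \<beta> (pre @ ([v], a) # post) = Wc \<alpha> \<beta> (pre @ post) + \<alpha> (cl ([v], a) v) * act pre + \<beta> (cl ([v], a) v) * act post"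
proof (induction pre)
  case Nil
  then show ?case by (simp add: sum_cross_N)
next
  case (Cons S pre)
  then show ?case by (simp add: cross_S_N algebra_simps)
qed

lemma own_ins: "own (pre @ ([v], a) # post) = own (pre @ post)"
  by (simp add: own_def)

lemma own_app: "Q \<noteq> [] \<Longrightarrow> own (pre @ (Q @ [v], b) # post) = own (pre @ (Q, True) # post) + 1"
  by (simp add: own_def)

lemma cl_app_old: "okv v (Q, True) \<Longrightarrow> y \<in> set Q \<Longrightarrow> cl (Q @ [v], b) y = cl (Q, True) y"
  by (auto simp: cl_def okv_def)

lemma cl_app_new: "okv v (Q, True) \<Longrightarrow> cl (Q @ [v], b) v = (if b then Cont else Clos)"
  by (cases Q) (auto simp: cl_def okv_def)

lemma sepS_app: "Q \<noteq> [] \<Longrightarrow> x < v \<Longrightarrow> sepS (Q @ [v], b) x = sepS (Q, True) x"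
  by (auto simp: sepS_def)

lemma cross_S_app: assumes "okv v S" "okv v (Q, True)"
  shows "cross \<alpha> \<beta> S (Q @ [v], b) = cross \<alpha> \<beta> S (Q, True) + \<alpha> (if b then Cont else Clos) * of_bool (snd S)"
proof -
  have Q: "Q \<noteq> []" "\<forall>y\<in>set Q. y < v" using assms by (auto simp: okv_def)
  have S: "\<forall>x\<in>set (fst S). x < v" using assms by (auto simp: okv_def)
  have 1: "(\<Sum>x\<in>set (fst S). \<beta> (cl S x) * of_bool (sepS (Q @ [v], b) x)) =
           (\<Sum>x\<in>set (fst S). \<beta> (cl S x) * of_bool (sepS (Q, True) x))"
    using S Q by (intro sum.cong) (auto simp: sepS_app)
  have vQ: "v \<notin> set Q" using Q by auto
  have 2: "(\<Sum>y\<in>set (Q @ [v]). \<alpha> (cl (Q @ [v], b) y) * of_bool (sepS S y)) =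
           \<alpha> (cl (Q @ [v], b) v) * of_bool (sepS S v) + (\<Sum>y\<in>set Q. \<alpha> (cl (Q @ [v], b) y) * of_bool (sepS S y))"
    using vQ by simp
  have 3: "(\<Sum>y\<in>set Q. \<alpha> (cl (Q @ [v], b) y) * of_bool (sepS S y)) = (\<Sum>y\<in>set Q. \<alpha> (cl (Q, True) y) * of_bool (sepS S y))"
    using assms(2) by (intro sum.cong) (auto simp: cl_app_old)
  show ?thesis unfolding cross_def using 1 2 3 cl_app_new[OF assms(2), of b] sepS_v[OF assms(1)]
    by simp
qed

lemma cross_app_T: assumes "okv v T" "okv v (Q, True)"
  shows "cross \<alpha> \<beta> (Q @ [v], b) T = cross \<alpha> \<beta> (Q, True) T + \<beta> (if b then Cont else Clos) * of_bool (snd T)"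
proof -
  have Q: "Q \<noteq> []" "\<forall>y\<in>set Q. y < v" using assms by (auto simp: okv_def)
  have T: "\<forall>x\<in>set (fst T). x < v" using assms by (auto simp: okv_def)
  have 1: "(\<Sum>y\<in>set (fst T). \<alpha> (cl T y) * of_bool (sepS (Q @ [v], b) y)) =
           (\<Sum>y\<in>set (fst T). \<alpha> (cl T y) * of_bool (sepS (Q, True) y))"
    using T Q by (intro sum.cong) (auto simp: sepS_app)
  have vQ: "v \<notin> set Q" using Q by auto
  have 2: "(\<Sum>x\<in>set (Q @ [v]). \<beta> (cl (Q @ [v], b) x) * of_bool (sepS T x)) =
           \<beta> (cl (Q @ [v], b) v) * of_bool (sepS T v) + (\<Sum>x\<in>set Q. \<beta> (cl (Q @ [v], b) x) * of_bool (sepS T x))"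
    using vQ by simp
  have 3: "(\<Sum>x\<in>set Q. \<beta> (cl (Q @ [v], b) x) * of_bool (sepS T x)) = (\<Sum>x\<in>set Q. \<beta> (cl (Q, True) x) * of_bool (sepS T x))"
    using assms(2) by (intro sum.cong) (auto simp: cl_app_old)
  show ?thesis unfolding cross_def using 1 2 3 cl_app_new[OF assms(2), of b] sepS_v[OF assms(1)]
    by simp
qed

lemma sum_cross_app: "okv v (Q, True) \<Longrightarrow> \<forall>T\<in>set post. okv v T \<Longrightarrow>
   sum_list (map (cross \<alpha> \<beta> (Q @ [v], b)) post) = sum_list (map (cross \<alpha> \<beta> (Q, True)) post)
     + \<beta> (if b then Cont else Clos) * act post"
  by (induction post) (auto simp: cross_app_T algebra_simps)

lemma Wc_app: "\<forall>S\<in>set pre. okv v S \<Longrightarrow> \<forall>T\<in>set post. okv v T \<Longrightarrow> okv v (Q, True) \<Longrightarrow>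
  Wc \<alpha> \<beta> (pre @ (Q @ [v], b) # post) = Wc \<alpha> \<beta> (pre @ (Q, True) # post)
     + \<alpha> (if b then Cont else Clos) * act pre + \<beta> (if b then Cont else Clos) * act post"
proof (induction pre)
  case Nil
  then show ?case by (simp add: sum_cross_app)
next
  case (Cons S pre)
  then show ?case by (simp add: cross_S_app algebra_simps)
qed


lemma valid_okv: "valid m s \<Longrightarrow> \<forall>S\<in>set s. okv (Suc m) S"
proof
  fix S assume v: "valid m s" and S: "S \<in> set s"
  have "fst S \<noteq> []" using v S unfolding valid_def by blast
  moreover have "\<forall>x\<in>set (fst S). x < Suc m" using valid_le[OF v S] by (simp add: less_Suc_eq_le)
  ultimately show "okv (Suc m) S" by (simp add: okv_def)
qed

lemma ins_props: assumes "g \<le> act s" "\<forall>S\<in>set s. okv v S"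
  shows "Wf \<alpha> \<beta> (ins ([v], a) g s) = Wf \<alpha> \<beta> s + \<alpha> (cl ([v], a) v) * g + \<beta> (cl ([v], a) v) * (act s - g)
     \<and> act (ins ([v], a) g s) = act s + of_bool a"
proof -
  obtain pre post where d: "s = pre @ post" "ins ([v], a) g s = pre @ ([v], a) # post" "act pre = g"
    using ins_decomp[OF assms(1)] by blast
  show ?thesis using Wc_ins[of pre v post \<alpha> \<beta> a] assms(2) d own_ins
    by (simp add: Wf_def algebra_simps)
qed

lemma app_props: assumes "j < act s" "\<forall>S\<in>set s. okv v S"
  shows "Wf \<alpha> \<beta> (app v b j s) = Wf \<alpha> \<beta> s + 1 + \<alpha> (if b then Cont else Clos) * j + \<beta> (if b then Cont else Clos) * (act s - 1 - j)
     \<and> act (app v b j s) + 1 = act s + of_bool b"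
proof -
  obtain pre Q post where d: "s = pre @ (Q, True) # post" "app v b j s = pre @ (Q @ [v], b) # post" "act pre = j"
    using app_decomp[OF assms(1)] by blast
  have "okv v (Q, True)" using assms(2) d by auto
  then have "Q \<noteq> []" by (simp add: okv_def)
  show ?thesis using Wc_app[of pre v post Q \<alpha> \<beta> b] assms(2) d own_app[OF \<open>Q \<noteq> []\<close>] \<open>okv v (Q, True)\<close>
    by (simp add: Wf_def algebra_simps)
qed

lemma cl_newT: "cl ([v], True) v = Op" by (simp add: cl_def)
lemma cl_newF: "cl ([v], False) v = Sing" by (simp add: cl_def)

lemma sum_list_upt: "sum_list (map f [0..<n]) = (\<Sum>i<n. f i)"
  by (induction n) auto

lemma geo: assumes "(a, b) \<in> {(2, 1), (1, 2)}"
  shows "(\<Sum>g<Suc h. (q::'a::comm_ring_1) ^ (a * g + b * (h - g))) = q ^ h * q_int (Suc h) q"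
proof -
  have "(\<Sum>g<Suc h. q ^ (a * g + b * (h - g))) = (\<Sum>g<Suc h. q ^ h * q ^ g)"
  proof (cases "a = 2")
    case True
    then have "b = 1" using assms by auto
    then have e: "\<And>g. g < Suc h \<Longrightarrow> a * g + b * (h - g) = h + g" using True by auto
    show ?thesis by (intro sum.cong refl) (simp add: e power_add)
  next
    case False
    then have ab: "a = 1" "b = 2" using assms by auto
    have "(\<Sum>g<Suc h. q ^ (a * g + b * (h - g))) = (\<Sum>g<Suc h. q ^ h * q ^ (h - g))"
    proof (intro sum.cong refl)
      fix g assume "g \<in> {..<Suc h}"
      then have "a * g + b * (h - g) = h + (h - g)" using ab by auto
      then show "q ^ (a * g + b * (h - g)) = q ^ h * q ^ (h - g)" by (simp add: power_add)
    qed
    also have "\<dots> = (\<Sum>g<Suc h. q ^ h * q ^ (Suc h - Suc g))" by simp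
    also have "\<dots> = (\<Sum>g<Suc h. q ^ h * q ^ g)"
      using sum.nat_diff_reindex[of "\<lambda>g. q ^ h * q ^ g" "Suc h"] by simp
    finally show ?thesis .
  qed
  also have "\<dots> = q ^ h * q_int (Suc h) q" by (simp only: q_int_def sum_distrib_left)
  finally show ?thesis .
qed

lemma geo2: assumes "(a, b) \<in> {(2, 1), (1, 2)}"
  shows "(\<Sum>j<h. (q::'a::comm_ring_1) ^ (1 + a * j + b * (h - 1 - j))) = q ^ h * q_int h q"
proof (cases h)
  case 0
  then show ?thesis by simp
next
  case (Suc h')
  have "(\<Sum>j<h. q ^ (1 + a * j + b * (h - 1 - j))) = (\<Sum>j<Suc h'. q * q ^ (a * j + b * (h' - j)))"
    using Suc by (intro sum.cong) simp_all
  also have "\<dots> = q * (\<Sum>j<Suc h'. q ^ (a * j + b * (h' - j)))" by (simp only: sum_distrib_left)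
  also have "\<dots> = q * (q ^ h' * q_int (Suc h') q)" by (simp only: geo[OF assms])
  finally show ?thesis using Suc by simp
qed



lemma sum_list_map_concat: "sum_list (map f (concat xss)) = sum_list (map (\<lambda>xs. sum_list (map f xs)) xss)"
  by (induction xss) auto

lemma sum_list_filter_ind: "sum_list (map (\<lambda>s. (g s :: 'b::comm_ring_1) * (if P s then 1 else 0)) xs) = sum_list (map g (filter P xs))"
  by (induction xs) auto

context
  fixes \<alpha> \<beta> :: "rclass \<Rightarrow> nat" and q :: "'a::comm_ring_1"
  assumes ab: "\<And>X. (\<alpha> X, \<beta> X) \<in> {(2, 1), (1, 2)}"
begin

lemma blockI: assumes "\<forall>S\<in>set s. okv v S"
  shows "sum_list (map (\<lambda>t. q ^ Wf \<alpha> \<beta> t * BB q k (act t)) (map (\<lambda>g. ins ([v], a) g s) [0..<Suc (act s)]))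
    = q ^ Wf \<alpha> \<beta> s * BB q k (act s + of_bool a) * (q ^ act s * q_int (Suc (act s)) q)"
proof -
  let ?c = "cl ([v], a) v"
  have "sum_list (map (\<lambda>t. q ^ Wf \<alpha> \<beta> t * BB q k (act t)) (map (\<lambda>g. ins ([v], a) g s) [0..<Suc (act s)]))
     = (\<Sum>g<Suc (act s). q ^ Wf \<alpha> \<beta> (ins ([v], a) g s) * BB q k (act (ins ([v], a) g s)))"
    by (simp only: map_map o_def sum_list_upt)
  also have "\<dots> = (\<Sum>g<Suc (act s). q ^ Wf \<alpha> \<beta> s * BB q k (act s + of_bool a) * q ^ (\<alpha> ?c * g + \<beta> ?c * (act s - g)))"
  proof (intro sum.cong refl)
    fix g assume "g \<in> {..<Suc (act s)}"
    then have "g \<le> act s" by simp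
    from ins_props[OF this assms, of \<alpha> \<beta> a] show "q ^ Wf \<alpha> \<beta> (ins ([v], a) g s) * BB q k (act (ins ([v], a) g s)) =
      q ^ Wf \<alpha> \<beta> s * BB q k (act s + of_bool a) * q ^ (\<alpha> ?c * g + \<beta> ?c * (act s - g))"
      by (simp add: power_add algebra_simps)
  qed
  also have "\<dots> = q ^ Wf \<alpha> \<beta> s * BB q k (act s + of_bool a) * (\<Sum>g<Suc (act s). q ^ (\<alpha> ?c * g + \<beta> ?c * (act s - g)))"
    by (simp only: sum_distrib_left)
  also have "\<dots> = q ^ Wf \<alpha> \<beta> s * BB q k (act s + of_bool a) * (q ^ act s * q_int (Suc (act s)) q)"
    by (simp only: geo[OF ab])
  finally show ?thesis .
qed

lemma blockA: assumes "\<forall>S\<in>set s. okv v S"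
  shows "sum_list (map (\<lambda>t. q ^ Wf \<alpha> \<beta> t * BB q k (act t)) (map (\<lambda>j. app v b j s) [0..<act s]))
    = q ^ Wf \<alpha> \<beta> s * BB q k (act s + of_bool b - 1) * (q ^ act s * q_int (act s) q)"
proof -
  let ?c = "if b then Cont else Clos"
  have "sum_list (map (\<lambda>t. q ^ Wf \<alpha> \<beta> t * BB q k (act t)) (map (\<lambda>j. app v b j s) [0..<act s]))
     = (\<Sum>j<act s. q ^ Wf \<alpha> \<beta> (app v b j s) * BB q k (act (app v b j s)))"
    by (simp only: map_map o_def sum_list_upt)
  also have "\<dots> = (\<Sum>j<act s. q ^ Wf \<alpha> \<beta> s * BB q k (act s + of_bool b - 1) * q ^ (1 + \<alpha> ?c * j + \<beta> ?c * (act s - 1 - j)))"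
  proof (intro sum.cong refl)
    fix j assume "j \<in> {..<act s}"
    then have "j < act s" by simp
    from app_props[OF this assms, of \<alpha> \<beta> b] have
      W: "Wf \<alpha> \<beta> (app v b j s) = Wf \<alpha> \<beta> s + 1 + \<alpha> ?c * j + \<beta> ?c * (act s - 1 - j)"
      and A: "act (app v b j s) + 1 = act s + of_bool b" by blast+
    have A': "act (app v b j s) = act s + of_bool b - 1" using A by simp
    have "q ^ Wf \<alpha> \<beta> (app v b j s) = q ^ Wf \<alpha> \<beta> s * q ^ (1 + \<alpha> ?c * j + \<beta> ?c * (act s - 1 - j))"
      unfolding W by (simp only: power_add[symmetric] add.assoc)
    then show "q ^ Wf \<alpha> \<beta> (app v b j s) * BB q k (act (app v b j s)) =
      q ^ Wf \<alpha> \<beta> s * BB q k (act s + of_bool b - 1) * q ^ (1 + \<alpha> ?c * j + \<beta> ?c * (act s - 1 - j))"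
      unfolding A' by (simp only: mult.assoc mult.commute mult.left_commute)
  qed
  also have "\<dots> = q ^ Wf \<alpha> \<beta> s * BB q k (act s + of_bool b - 1) * (\<Sum>j<act s. q ^ (1 + \<alpha> ?c * j + \<beta> ?c * (act s - 1 - j)))"
    by (simp only: sum_distrib_left)
  also have "\<dots> = q ^ Wf \<alpha> \<beta> s * BB q k (act s + of_bool b - 1) * (q ^ act s * q_int (act s) q)"
    by (simp only: geo2[OF ab])
  finally show ?thesis .
qed

lemma ext_sum: assumes "valid m s"
  shows "sum_list (map (\<lambda>t. q ^ Wf \<alpha> \<beta> t * BB q k (act t)) (ext s (Suc m))) = q ^ Wf \<alpha> \<beta> s * BB q (Suc k) (act s)"
proof -
  have ok: "\<forall>S\<in>set s. okv (Suc m) S" using valid_okv[OF assms] .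
  let ?f = "\<lambda>t. q ^ Wf \<alpha> \<beta> t * BB q k (act t)"
  let ?h = "act s"
  have "sum_list (map ?f (ext s (Suc m))) =
     sum_list (map ?f (map (\<lambda>g. ins ([Suc m], True) g s) [0..<Suc ?h])) +
     sum_list (map ?f (map (\<lambda>g. ins ([Suc m], False) g s) [0..<Suc ?h])) +
     sum_list (map ?f (map (\<lambda>j. app (Suc m) True j s) [0..<?h])) +
     sum_list (map ?f (map (\<lambda>j. app (Suc m) False j s) [0..<?h]))"
    unfolding ext_def by (simp only: map_append sum_list_append add.assoc)
  also have "\<dots> = q ^ Wf \<alpha> \<beta> s * (q ^ ?h * q_int (Suc ?h) q * (BB q k (Suc ?h) + BB q k ?h)
       + q ^ ?h * q_int ?h q * (BB q k ?h + BB q k (?h - 1)))"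
    by (simp only: blockI[OF ok] blockA[OF ok]) (simp add: algebra_simps)
  also have "\<dots> = q ^ Wf \<alpha> \<beta> s * BB q (Suc k) ?h"
    by (cases "?h = 0") (simp_all add: BB_rec)
  finally show ?thesis .
qed

lemma martingale: "m \<le> n \<Longrightarrow> sum_list (map (\<lambda>s. q ^ Wf \<alpha> \<beta> s * BB q (n - m) (act s)) (gen m)) = BB q n 0"
proof (induction m)
  case 0
  then show ?case by (simp add: Wf_def own_def)
next
  case (Suc m)
  then have IH: "sum_list (map (\<lambda>s. q ^ Wf \<alpha> \<beta> s * BB q (Suc (n - Suc m)) (act s)) (gen m)) = BB q n 0"
    by (simp add: Suc_diff_Suc)
  have "sum_list (map (\<lambda>s. q ^ Wf \<alpha> \<beta> s * BB q (n - Suc m) (act s)) (gen (Suc m)))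
     = sum_list (map (\<lambda>s. sum_list (map (\<lambda>t. q ^ Wf \<alpha> \<beta> t * BB q (n - Suc m) (act t)) (ext s (Suc m)))) (gen m))"
    by (simp add: sum_list_map_concat map_map o_def)
  also have "\<dots> = sum_list (map (\<lambda>s. q ^ Wf \<alpha> \<beta> s * BB q (Suc (n - Suc m)) (act s)) (gen m))"
    by (intro arg_cong[where f = sum_list] map_cong refl ext_sum gen_valid)
  finally show ?case using IH by simp
qed

lemma gen_sum: "sum_list (map (\<lambda>s. q ^ Wf \<alpha> \<beta> s) (filter (\<lambda>s. act s = 0) (gen n))) = q_fact n q"
proof -
  have "sum_list (map (\<lambda>s. q ^ Wf \<alpha> \<beta> s * BB q (n - n) (act s)) (gen n)) = BB q n 0"
    by (rule martingale) simp
  moreover have "sum_list (map (\<lambda>s. q ^ Wf \<alpha> \<beta> s * BB q (n - n) (act s)) (gen n)) =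
      sum_list (map (\<lambda>s. q ^ Wf \<alpha> \<beta> s) (filter (\<lambda>s. act s = 0) (gen n)))"
    by (simp add: BB_0 sum_list_filter_ind)
  ultimately show ?thesis by (simp add: BB_n0)
qed

end



lemma runs_app: "P \<noteq> [] \<Longrightarrow> sorted_wrt (<) P \<Longrightarrow> (ys = [] \<or> hd ys < last P) \<Longrightarrow> runs (P @ ys) = P # runs ys"
proof (induction P)
  case Nil
  then show ?case by simp
next
  case (Cons x P)
  show ?case
  proof (cases P)
    case Nil
    then show ?thesis using Cons.prems by (cases ys) auto
  next
    case (Cons x' P')
    then have "x < x'" using Cons.prems by simp
    moreover have "runs (P @ ys) = P # runs ys" using Cons.IH Cons.prems \<open>P = x' # P'\<close> by simp
    ultimately show ?thesis using \<open>P = x' # P'\<close> by simp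
  qed
qed

lemma runs_cc: "\<forall>S\<in>set s. fst S \<noteq> [] \<and> sorted_wrt (<) (fst S) \<Longrightarrow> chain s \<Longrightarrow> \<forall>S\<in>set s. \<not> snd S
   \<Longrightarrow> runs (cc s) = map fst s"
proof (induction s)
  case Nil
  then show ?case by simp
next
  case (Cons S s)
  have "cc s = [] \<or> hd (cc s) < last (fst S)"
  proof (cases s)
    case (Cons T s')
    then have "fst T \<noteq> []" using Cons.prems by auto
    then have "hd (cc s) = hd (fst T)" using Cons by simp
    then show ?thesis using Cons.prems Cons by (auto simp: chain_Cons)
  qed simp
  then show ?case using Cons runs_app[of "fst S" "cc s"] by (auto simp: chain_Cons)
qed

lemma runs_concat: "concat (runs xs) = xs"
  by (induction xs rule: runs.induct) (auto split: list.splits)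

lemma runs_ne: "xs \<noteq> [] \<Longrightarrow> runs xs \<noteq> []"
  by (induction xs rule: runs.induct) (auto split: list.splits)

lemma runs_hd: "hd (hd (runs (y # zs))) = y"
  by (induction "y # zs" arbitrary: y zs rule: runs.induct) (auto split: list.splits)

lemma runs_seg: "r \<in> set (runs xs) \<Longrightarrow> r \<noteq> [] \<and> sorted_wrt (<) r"
proof (induction xs arbitrary: r rule: runs.induct)
  case 1
  then show ?case by simp
next
  case (2 x)
  then show ?case by simp
next
  case (3 x y zs)
  show ?case
  proof (cases "x < y")
    case True
    obtain r0 rs where rr: "runs (y # zs) = r0 # rs" using runs_ne[of "y # zs"] by (cases "runs (y # zs)") auto
    have "hd r0 = y" using runs_hd[of y zs] rr by simp
    have "r0 \<noteq> [] \<and> sorted_wrt (<) r0" using 3(1)[OF True] rr by simp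
    then have "\<forall>z\<in>set r0. y \<le> z" using \<open>hd r0 = y\<close> by (cases r0) auto
    then have "sorted_wrt (<) (x # r0)" using True \<open>r0 \<noteq> [] \<and> sorted_wrt (<) r0\<close> by auto
    then show ?thesis using 3 True rr by auto
  next
    case False
    then show ?thesis using 3 by auto
  qed
qed

lemma runs_chain: "distinct xs \<Longrightarrow> chain (map (\<lambda>r. (r, False)) (runs xs))"
proof (induction xs rule: runs.induct)
  case 1
  then show ?case by simp
next
  case (2 x)
  then show ?case by simp
next
  case (3 x y zs)
  obtain r0 rs where rr: "runs (y # zs) = r0 # rs" using runs_ne[of "y # zs"] by (cases "runs (y # zs)") auto
  have r0: "r0 \<noteq> []" using runs_seg[of r0 "y # zs"] rr by simp
  have ch: "chain (map (\<lambda>r. (r, False)) (r0 # rs))" using 3 rr by (cases "x < y") auto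
  show ?case
  proof (cases "x < y")
    case True
    then have "runs (x # y # zs) = (x # r0) # rs" using rr by simp
    moreover have "last (x # r0) = last r0" using r0 by simp
    ultimately show ?thesis using ch by (auto simp: chain_Cons)
  next
    case False
    have "hd r0 = y" using runs_hd[of y zs] rr by simp
    moreover have "x \<noteq> y" using "3.prems" by auto
    ultimately have "hd r0 < x" using False by simp
    then show ?thesis using False rr ch by (simp add: chain_Cons)
  qed
qed



definition Lc :: "seg list \<Rightarrow> nat \<Rightarrow> nat \<Rightarrow> nat" where
  "Lc s k x = (\<Sum>j<k. of_bool (sepS (s ! j) x))"
definition Rc :: "seg list \<Rightarrow> nat \<Rightarrow> nat \<Rightarrow> nat" where
  "Rc s k x = (\<Sum>j\<in>{Suc k..<length s}. of_bool (sepS (s ! j) x))"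

definition CC :: "(rclass \<Rightarrow> nat) \<Rightarrow> (rclass \<Rightarrow> nat) \<Rightarrow> seg list \<Rightarrow> nat" where
  "CC \<alpha> \<beta> s = (\<Sum>k<length s. \<Sum>x\<in>set (fst (s ! k)).
      \<alpha> (cl (s ! k) x) * Lc s k x + \<beta> (cl (s ! k) x) * Rc s k x)"

lemma Lc_Cons0: "Lc (S # ss) 0 x = 0" by (simp add: Lc_def)
lemma Rc_Cons0: "Rc (S # ss) 0 x = (\<Sum>j<length ss. of_bool (sepS (ss ! j) x))"
  unfolding Rc_def by (simp only: length_Cons sum.shift_bounds_Suc_ivl nth_Cons_Suc atLeast0LessThan)
lemma Lc_ConsS: "Lc (S # ss) (Suc k) x = of_bool (sepS S x) + Lc ss k x"
  unfolding Lc_def by (simp only: sum.lessThan_Suc_shift nth_Cons_Suc nth_Cons_0)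
lemma Rc_ConsS: "Rc (S # ss) (Suc k) x = Rc ss k x"
  unfolding Rc_def by (simp only: length_Cons sum.shift_bounds_Suc_ivl nth_Cons_Suc)

lemma Wc_CC: "Wc \<alpha> \<beta> s = CC \<alpha> \<beta> s"
proof (induction s)
  case Nil
  then show ?case by (simp add: CC_def)
next
  case (Cons S ss)
  let ?l = "length ss"
  have "CC \<alpha> \<beta> (S # ss) = (\<Sum>x\<in>set (fst S). \<beta> (cl S x) * (\<Sum>j<?l. of_bool (sepS (ss ! j) x)))
     + (\<Sum>k<?l. \<Sum>x\<in>set (fst (ss ! k)). \<alpha> (cl (ss ! k) x) * (of_bool (sepS S x) + Lc ss k x) + \<beta> (cl (ss ! k) x) * Rc ss k x)"
    unfolding CC_def by (simp only: length_Cons sum.lessThan_Suc_shift nth_Cons_0 nth_Cons_Suc Lc_Cons0 Rc_Cons0 Lc_ConsS Rc_ConsS)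
      simp
  also have "\<dots> = (\<Sum>x\<in>set (fst S). \<beta> (cl S x) * (\<Sum>j<?l. of_bool (sepS (ss ! j) x)))
     + (\<Sum>k<?l. \<Sum>x\<in>set (fst (ss ! k)). \<alpha> (cl (ss ! k) x) * of_bool (sepS S x)) + CC \<alpha> \<beta> ss"
    unfolding CC_def by (simp add: algebra_simps sum.distrib)
  also have "(\<Sum>x\<in>set (fst S). \<beta> (cl S x) * (\<Sum>j<?l. of_bool (sepS (ss ! j) x)))
      = (\<Sum>k<?l. \<Sum>x\<in>set (fst S). \<beta> (cl S x) * of_bool (sepS (ss ! k) x))"
    by (simp only: sum_distrib_left) (rule sum.swap)
  finally have "CC \<alpha> \<beta> (S # ss) = (\<Sum>k<?l. cross \<alpha> \<beta> S (ss ! k)) + CC \<alpha> \<beta> ss"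
    unfolding cross_def by (simp add: sum.distrib)
  moreover have "sum_list (map (cross \<alpha> \<beta> S) ss) = (\<Sum>k<?l. cross \<alpha> \<beta> S (ss ! k))"
    by (simp add: sum_list_sum_nth atLeast0LessThan)
  ultimately show ?case using Cons by simp
qed



lemma dist_nth: "distinct (concat xs) \<Longrightarrow> i < length xs \<Longrightarrow> j < length xs \<Longrightarrow> i \<noteq> j \<Longrightarrow>
   set (xs ! i) \<inter> set (xs ! j) = {}"
proof (induction xs arbitrary: i j)
  case Nil
  then show ?case by simp
next
  case (Cons a xs)
  show ?case
  proof (cases i)
    case 0
    then obtain j' where "j = Suc j'" "j' < length xs" using Cons.prems by (cases j) auto
    then have "xs ! j' \<in> set xs" by simp
    then have "set (xs ! j') \<subseteq> set (concat xs)" by (auto simp del: nth_mem)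
    then show ?thesis using Cons.prems 0 \<open>j = Suc j'\<close> by auto
  next
    case (Suc i')
    show ?thesis
    proof (cases j)
      case 0
      have "i' < length xs" using Cons.prems Suc by simp
      then have "xs ! i' \<in> set xs" by simp
      then have "set (xs ! i') \<subseteq> set (concat xs)" by (auto simp del: nth_mem)
      then show ?thesis using Cons.prems 0 Suc by auto
    next
      case (Suc j')
      then show ?thesis using Cons.IH[of i' j'] Cons.prems \<open>i = Suc i'\<close> by auto
    qed
  qed
qed

context
  fixes s :: "seg list"
  assumes dis: "distinct (cc s)"
begin

lemma seg_unique: "k < length s \<Longrightarrow> k' < length s \<Longrightarrow> x \<in> set (fst (s ! k)) \<Longrightarrow> x \<in> set (fst (s ! k')) \<Longrightarrow> k' = k"
  using dist_nth[of "map fst s" k k'] dis by (auto simp: cc_def)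

lemma seg_unique2: "k < length s \<Longrightarrow> x \<in> set (fst (s ! k)) \<Longrightarrow> r \<in> set (map fst s) \<Longrightarrow> x \<in> set r \<Longrightarrow> r = fst (s ! k)"
proof -
  assume k: "k < length s" "x \<in> set (fst (s ! k))" and r: "r \<in> set (map fst s)" "x \<in> set r"
  then obtain k' where "k' < length s" "r = fst (s ! k')" by (auto simp: in_set_conv_nth)
  then show ?thesis using seg_unique[OF k(1) \<open>k' < length s\<close> k(2)] r by simp
qed

lemma run_idx_eq: "runs (cc s) = map fst s \<Longrightarrow> k < length s \<Longrightarrow> x \<in> set (fst (s ! k)) \<Longrightarrow> run_idx (cc s) x = k"
  unfolding run_idx_def by (rule the_equality) (auto intro: seg_unique)

end

lemma card_lt_sum: "card {j. j < (k::nat) \<and> P j} = (\<Sum>j<k. of_bool (P j) :: nat)"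
proof -
  have "{j. j < k \<and> P j} = {j\<in>{..<k}. P j}" by auto
  then show ?thesis by (simp only: card_eq_sum sum.inter_filter[OF finite_lessThan]) (simp add: of_bool_def)
qed

lemma card_ivl_sum: "card {j. (k::nat) < j \<and> j < l \<and> P j} = (\<Sum>j\<in>{Suc k..<l}. of_bool (P j) :: nat)"
proof -
  have "{j. k < j \<and> j < l \<and> P j} = {j\<in>{Suc k..<l}. P j}" by auto
  then show ?thesis by (simp only: card_eq_sum sum.inter_filter[OF finite_atLeastLessThan]) (simp add: of_bool_def)
qed

lemma sepS_F: "sepS (P, False) x = separates P x"
  by (simp add: sepS_def separates_def)



lemma hd_neq_last: "distinct P \<Longrightarrow> 2 \<le> length P \<Longrightarrow> hd P \<noteq> last P"
  by (cases P rule: remdups_adj.cases) auto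

context
  fixes s :: "seg list" and n :: nat
  assumes v: "valid n s" and nf: "\<forall>S\<in>set s. \<not> snd S"
begin

lemma dis: "distinct (cc s)" using v by (simp add: valid_def)

lemma R: "runs (cc s) = map fst s"
  using v nf by (intro runs_cc) (auto simp: valid_def)

lemma sk: "k < length s \<Longrightarrow> s ! k = (fst (s ! k), False)"
  using nf nth_mem[of k s] by (cases "s ! k") auto

lemma in_cc: "x \<in> set (cc s) \<longleftrightarrow> (\<exists>k<length s. x \<in> set (fst (s ! k)))"
proof -
  have "x \<in> set (cc s) \<longleftrightarrow> (\<exists>S\<in>set s. x \<in> set (fst S))" by (auto simp: cc_def)
  also have "\<dots> \<longleftrightarrow> (\<exists>k<length s. x \<in> set (fst (s ! k)))"
    by (metis in_set_conv_nth nth_mem)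
  finally show ?thesis .
qed

lemma class_sub: "class_set X (cc s) \<subseteq> set (cc s)"
proof -
  have "\<And>r. r \<in> set (runs (cc s)) \<Longrightarrow> set r \<subseteq> set (cc s)"
    using runs_concat[of "cc s"] by (metis Union_upper set_concat image_eqI set_map)
  moreover have "\<And>r. r \<in> set (runs (cc s)) \<Longrightarrow> r \<noteq> []" using runs_seg by blast
  ultimately show ?thesis unfolding class_set_def
    by (cases X) (auto, (meson hd_in_set last_in_set subsetD)+)
qed

lemma class_char: assumes k: "k < length s" "x \<in> set (fst (s ! k))"
  shows "x \<in> class_set X (cc s) \<longleftrightarrow> X = cl (s ! k) x"
proof -
  define P where "P = fst (s ! k)"
  have Pin: "P \<in> set (map fst s)" using k by (simp add: P_def)
  have xP: "x \<in> set P" using k by (simp add: P_def)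
  have Pne: "P \<noteq> []" using xP by auto
  have dP: "distinct P" using dis Pin by (auto simp: cc_def distinct_concat_iff)
  have u: "\<And>r. r \<in> set (map fst s) \<Longrightarrow> x \<in> set r \<Longrightarrow> r = P"
    using seg_unique2[OF dis k] by (simp add: P_def)
  have HO: "(x \<in> {hd r |r. r \<in> set (runs (cc s)) \<and> 2 \<le> length r}) \<longleftrightarrow> (x = hd P \<and> 2 \<le> length P)"
  proof
    assume "x \<in> {hd r |r. r \<in> set (runs (cc s)) \<and> 2 \<le> length r}"
    then obtain r where r: "x = hd r" "r \<in> set (map fst s)" "2 \<le> length r" using R by auto
    then have "x \<in> set r" by (cases r) auto
    then show "x = hd P \<and> 2 \<le> length P" using u r by auto
  next
    assume "x = hd P \<and> 2 \<le> length P"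
    then show "x \<in> {hd r |r. r \<in> set (runs (cc s)) \<and> 2 \<le> length r}" using R Pin by auto
  qed
  have CL: "(x \<in> {last r |r. r \<in> set (runs (cc s)) \<and> 2 \<le> length r}) \<longleftrightarrow> (x = last P \<and> 2 \<le> length P)"
  proof
    assume "x \<in> {last r |r. r \<in> set (runs (cc s)) \<and> 2 \<le> length r}"
    then obtain r where r: "x = last r" "r \<in> set (map fst s)" "2 \<le> length r" using R by auto
    then have "x \<in> set r" by (cases r) auto
    then show "x = last P \<and> 2 \<le> length P" using u r by auto
  next
    assume "x = last P \<and> 2 \<le> length P"
    then show "x \<in> {last r |r. r \<in> set (runs (cc s)) \<and> 2 \<le> length r}" using R Pin by auto
  qed
  have SG: "(x \<in> {hd r |r. r \<in> set (runs (cc s)) \<and> length r = 1}) \<longleftrightarrow> length P = 1"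
  proof
    assume "x \<in> {hd r |r. r \<in> set (runs (cc s)) \<and> length r = 1}"
    then obtain r where r: "x = hd r" "r \<in> set (map fst s)" "length r = 1" using R by auto
    then have "x \<in> set r" by (cases r) auto
    then show "length P = 1" using u r by auto
  next
    assume "length P = 1"
    then have "x = hd P" using xP by (cases P) auto
    then show "x \<in> {hd r |r. r \<in> set (runs (cc s)) \<and> length r = 1}" using R Pin \<open>length P = 1\<close> by auto
  qed
  have xcc: "x \<in> set (cc s)" using in_cc k by blast
  have clx: "cl (s ! k) x = (if length P = 1 then Sing else if x = hd P then Op else if x = last P then Clos else Cont)"
  proof -
    have "\<not> snd (s ! k)" using nf nth_mem[OF k(1)] by blast
    then show ?thesis by (simp add: cl_def P_def)
  qed
  have len: "length P \<noteq> 1 \<Longrightarrow> 2 \<le> length P" using Pne by (cases P) (auto simp: Suc_le_eq)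
  have hl: "2 \<le> length P \<Longrightarrow> hd P \<noteq> last P" using hd_neq_last dP by blast
  show ?thesis
    unfolding class_set_def clx
    by (cases X) (simp_all only: rclass.simps HO CL SG Diff_iff Un_iff xcc, (use len hl in auto)+)
qed


lemma lsg_eq: assumes k: "k < length s" "x \<in> set (fst (s ! k))"
  shows "lsg (cc s) x = Lc s k x" "rsg (cc s) x = Rc s k x"
proof -
  have idx: "run_idx (cc s) x = k" using run_idx_eq[OF dis R k] .
  have sepj: "\<And>j. j < length s \<Longrightarrow> separates (fst (s ! j)) x = sepS (s ! j) x"
    using sk sepS_F by metis
  have "lsg (cc s) x = card {j. j < k \<and> sepS (s ! j) x}"
    unfolding lsg_def idx R using k sepj by (intro arg_cong[where f=card] Collect_cong) auto
  then show "lsg (cc s) x = Lc s k x" by (simp only: Lc_def card_lt_sum)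
  have "rsg (cc s) x = card {j. k < j \<and> j < length s \<and> sepS (s ! j) x}"
    unfolding rsg_def idx R length_map using sepj by (intro arg_cong[where f=card] Collect_cong) auto
  then show "rsg (cc s) x = Rc s k x" by (simp only: Rc_def card_ivl_sum)
qed

lemma rclass_UNIV: "{Sing, Cont, Op, Clos} = (UNIV :: rclass set)"
  using rclass.exhaust by auto

lemma link_sum: "(\<Sum>X\<in>{Sing, Cont, Op, Clos}. \<alpha> X * lsgX X (cc s) + \<beta> X * rsgX X (cc s)) = CC \<alpha> \<beta> s"
proof -
  define c where "c x = cl (s ! run_idx (cc s) x) x" for x
  define F where "F x = \<alpha> (c x) * lsg (cc s) x + \<beta> (c x) * rsg (cc s) x" for x
  have cs: "class_set X (cc s) = {x \<in> set (cc s). c x = X}" for X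
  proof (intro set_eqI iffI)
    fix x assume x: "x \<in> class_set X (cc s)"
    then have "x \<in> set (cc s)" using class_sub by blast
    then obtain k where k: "k < length s" "x \<in> set (fst (s ! k))" using in_cc by blast
    then show "x \<in> {x \<in> set (cc s). c x = X}"
      using x class_char[OF k] run_idx_eq[OF dis R k] \<open>x \<in> set (cc s)\<close> by (simp add: c_def)
  next
    fix x assume x: "x \<in> {x \<in> set (cc s). c x = X}"
    then obtain k where k: "k < length s" "x \<in> set (fst (s ! k))" using in_cc by blast
    then show "x \<in> class_set X (cc s)"
      using x class_char[OF k] run_idx_eq[OF dis R k] by (simp add: c_def)
  qed
  have "(\<Sum>X\<in>{Sing, Cont, Op, Clos}. \<alpha> X * lsgX X (cc s) + \<beta> X * rsgX X (cc s))
      = (\<Sum>X\<in>UNIV. \<Sum>x\<in>{x \<in> set (cc s). c x = X}. \<alpha> X * lsg (cc s) x + \<beta> X * rsg (cc s) x)"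
    unfolding rclass_UNIV lsgX_def rsgX_def cs by (simp add: sum_distrib_left sum.distrib)
  also have "\<dots> = (\<Sum>X\<in>UNIV. \<Sum>x\<in>{x \<in> set (cc s). c x = X}. F x)"
    by (intro sum.cong refl) (auto simp: F_def)
  also have "\<dots> = (\<Sum>x\<in>set (cc s). F x)"
    by (rule sum.group) (auto simp: rclass_UNIV[symmetric] intro: rclass.exhaust)
  also have "set (cc s) = (\<Union>k\<in>{..<length s}. set (fst (s ! k)))" using in_cc by blast
  also have "(\<Sum>x\<in>(\<Union>k\<in>{..<length s}. set (fst (s ! k))). F x) = (\<Sum>k<length s. \<Sum>x\<in>set (fst (s ! k)). F x)"
    by (rule sum.UNION_disjoint) (auto dest: seg_unique[OF dis])
  also have "\<dots> = CC \<alpha> \<beta> s"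
    unfolding CC_def
  proof (intro sum.cong refl)
    fix k x assume "k \<in> {..<length s}" "x \<in> set (fst (s ! k))"
    then have k: "k < length s" "x \<in> set (fst (s ! k))" by auto
    show "F x = \<alpha> (cl (s ! k) x) * Lc s k x + \<beta> (cl (s ! k) x) * Rc s k x"
      using lsg_eq[OF k] run_idx_eq[OF dis R k] by (simp add: F_def c_def)
  qed
  finally show ?thesis .
qed

lemma own_len: "\<forall>S\<in>set s'. fst S \<noteq> [] \<Longrightarrow> own s' + length s' = length (cc s')"
proof (induction s')
  case Nil
  then show ?case by (simp add: own_def)
next
  case (Cons S s')
  have "own (S # s') = (length (fst S) - 1) + own s'" by (simp add: own_def)
  moreover have "length (fst S) \<ge> 1" using Cons.prems by (cases "fst S") auto
  moreover have "own s' + length s' = length (cc s')" using Cons by simp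
  ultimately show ?case by simp
qed

lemma link: "n - run (cc s) + (\<Sum>X\<in>{Sing, Cont, Op, Clos}. \<alpha> X * lsgX X (cc s) + \<beta> X * rsgX X (cc s)) = Wf \<alpha> \<beta> s"
proof -
  have "length (cc s) = n" using v distinct_card[of "cc s"] by (simp add: valid_def)
  moreover have "own s + length s = length (cc s)" using v by (intro own_len) (auto simp: valid_def)
  moreover have "run (cc s) = length s" by (simp add: run_def R)
  ultimately have "n - run (cc s) = own s" by simp
  then show ?thesis by (simp add: link_sum Wf_def Wc_CC)
qed

end



lemma q_fact_one: "q_fact n (1::int) = of_nat (fact n)"
proof (induction n)
  case 0
  then show ?case by (simp add: q_fact_0)
next
  case (Suc n)
  have "q_int (Suc n) (1::int) = of_nat (Suc n)" by (simp add: q_int_def)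
  then show ?case using Suc by (simp add: q_fact_Suc algebra_simps)
qed

lemma act0: "act s = 0 \<longleftrightarrow> (\<forall>S\<in>set s. \<not> snd S)"
  by (simp add: act_def filter_empty_conv)

theorem mainTheorem2:
  fixes \<alpha> \<beta> :: "rclass \<Rightarrow> nat" and n :: nat and q :: "'a::comm_ring_1"
  assumes "\<And>X. (\<alpha> X, \<beta> X) \<in> {(2, 1), (1, 2)}"
    and "n \<ge> 1"
  shows "(\<Sum>\<sigma>\<in>permutations_of_set {1..n}.
            q ^ (n - run \<sigma> + (\<Sum>X\<in>{Sing, Cont, Op, Clos}. \<alpha> X * lsgX X \<sigma> + \<beta> X * rsgX X \<sigma>)))
         = q_fact n q"
proof -
  define L0 where "L0 = filter (\<lambda>s. act s = 0) (gen n)"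
  define L where "L = map cc L0"
  define f where "f \<sigma> = q ^ (n - run \<sigma> + (\<Sum>X\<in>{Sing, Cont, Op, Clos}. \<alpha> X * lsgX X \<sigma> + \<beta> X * rsgX X \<sigma>))" for \<sigma>
  have L0v: "valid n s \<and> (\<forall>S\<in>set s. \<not> snd S)" if "s \<in> set L0" for s
    using that gen_valid act0 by (auto simp: L0_def)
  have setL: "set L = permutations_of_set {1..n}"
  proof
    show "set L \<subseteq> permutations_of_set {1..n}"
      using L0v by (auto simp: L_def permutations_of_set_def valid_def)
  next
    show "permutations_of_set {1..n} \<subseteq> set L"
    proof
      fix \<sigma> assume "\<sigma> \<in> permutations_of_set {1..n}"
      then have \<sigma>: "distinct \<sigma>" "set \<sigma> = {1..n}" by (auto simp: permutations_of_set_def)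
      define s where "s = map (\<lambda>r. (r, False)) (runs \<sigma>)"
      have ccs: "cc s = \<sigma>" by (simp add: s_def cc_def o_def runs_concat)
      have "valid n s" unfolding valid_def ccs using \<sigma> runs_seg runs_chain[OF \<sigma>(1)]
        by (auto simp: s_def)
      then have "s \<in> set (gen n)" by (rule gen_complete)
      moreover have "act s = 0" by (simp add: act0 s_def)
      ultimately have "s \<in> set L0" by (simp add: L0_def)
      then show "\<sigma> \<in> set L" using ccs by (auto simp: L_def)
    qed
  qed
  have "sum_list (map (\<lambda>s. (1::int) ^ Wf \<alpha> \<beta> s) L0) = q_fact n 1"
    unfolding L0_def by (rule gen_sum[OF assms(1)])
  then have "int (length L0) = int (fact n)" by (simp add: q_fact_one sum_list_triv)
  then have "length L0 = fact n" by (simp only: int_int_eq)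
  then have "length L = fact n" by (simp add: L_def)
  moreover have "card (set L) = fact n" using setL by simp
  ultimately have dL: "distinct L" by (simp add: card_distinct)
  have "(\<Sum>\<sigma>\<in>permutations_of_set {1..n}. f \<sigma>) = sum_list (map f L)"
    using setL sum.distinct_set_conv_list[OF dL, of f] by simp
  also have "\<dots> = sum_list (map (\<lambda>s. q ^ Wf \<alpha> \<beta> s) L0)"
    unfolding L_def map_map o_def f_def
    by (intro arg_cong[where f=sum_list] map_cong refl) (use L0v link in auto)
  also have "\<dots> = q_fact n q" unfolding L0_def by (rule gen_sum[OF assms(1)])
  finally show ?thesis by (simp add: f_def)
qed


end
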